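(* $\mathsf{LC}$ is decidable: there is an algorithm deciding, for any modal proposition $A$, whether $\mathsf{LC}\vdash A$.
   Context: Modal language: propositional variables, $\bot$, $\wedge,\vee,\to$, $\Box$. $\mathsf{iGL}$: intuitionistic propositional logic in the modal language plus $\Box(A\to B)\to(\Box A\to\Box B)$, $\Box A\to\Box\Box A$, $\Box(\Box A\to A)\to\Box A$, closed under modus ponens and necessitation. $\mathsf{LC}:=\mathsf{iGL}+\{A\to\Box A\}$. *)

theory Defs
  imports Main "HOL-Library.Nat_Bijection"
begin

datatype form =
    Var nat
  | Bot
  | And form form
  | Or form form
  | Imp form form
  | Box form

inductive LC_prf :: "form \<Rightarrow> bool" where
  ax_K:    "LC_prf (Imp A (Imp B A))"
| ax_S:    "LC_prf (Imp (Imp A (Imp B C)) (Imp (Imp A B) (Imp A C)))"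
| ax_and1: "LC_prf (Imp (And A B) A)"
| ax_and2: "LC_prf (Imp (And A B) B)"
| ax_andI: "LC_prf (Imp A (Imp B (And A B)))"
| ax_or1:  "LC_prf (Imp A (Or A B))"
| ax_or2:  "LC_prf (Imp B (Or A B))"
| ax_orE:  "LC_prf (Imp (Imp A C) (Imp (Imp B C) (Imp (Or A B) C)))"
| ax_efq:  "LC_prf (Imp Bot A)"
| ax_boxK: "LC_prf (Imp (Box (Imp A B)) (Imp (Box A) (Box B)))"
| ax_box4: "LC_prf (Imp (Box A) (Box (Box A)))"
| ax_lob:  "LC_prf (Imp (Box (Imp (Box A) A)) (Box A))"
| ax_comp: "LC_prf (Imp A (Box A))"
| mp:      "LC_prf (Imp A B) \<Longrightarrow> LC_prf A \<Longrightarrow> LC_prf B"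
| nec:     "LC_prf A \<Longrightarrow> LC_prf (Box A)"

fun enc :: "form \<Rightarrow> nat" where
  "enc (Var n) = prod_encode (0, n)"
| "enc Bot = prod_encode (1, 0)"
| "enc (And a b) = prod_encode (2, prod_encode (enc a, enc b))"
| "enc (Or a b) = prod_encode (3, prod_encode (enc a, enc b))"
| "enc (Imp a b) = prod_encode (4, prod_encode (enc a, enc b))"
| "enc (Box a) = prod_encode (5, enc a)"

section \<open>Partial (mu-)recursive functions as the model of algorithm\<close>

datatype recf =
    Zero
  | Succ
  | Proj nat
  | Comp recf "recf list"
  | Prim recf recf
  | Mn recf

inductive rec_eval :: "recf \<Rightarrow> nat list \<Rightarrow> nat \<Rightarrow> bool" where
  ev_zero: "rec_eval Zero xs 0"
| ev_succ: "rec_eval Succ (x # xs) (Suc x)"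
| ev_proj: "i < length xs \<Longrightarrow> rec_eval (Proj i) xs (xs ! i)"
| ev_comp: "length ys = length gs \<Longrightarrow> (\<forall>i < length gs. rec_eval (gs ! i) xs (ys ! i))
             \<Longrightarrow> rec_eval f ys z \<Longrightarrow> rec_eval (Comp f gs) xs z"
| ev_prim0: "rec_eval f xs y \<Longrightarrow> rec_eval (Prim f g) (0 # xs) y"
| ev_primS: "rec_eval (Prim f g) (n # xs) y \<Longrightarrow> rec_eval g (n # y # xs) z
             \<Longrightarrow> rec_eval (Prim f g) (Suc n # xs) z"
| ev_mn: "rec_eval f (n # xs) 0 \<Longrightarrow> (\<forall>m < n. \<exists>y. rec_eval f (m # xs) y \<and> y \<noteq> 0)
             \<Longrightarrow> rec_eval (Mn f) xs n"

definition decidable_forms :: "(form \<Rightarrow> bool) \<Rightarrow> bool" where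
  "decidable_forms P \<longleftrightarrow>
     (\<exists>f. \<forall>A. rec_eval f [enc A] (if P A then 1 else 0))"

end

theory Submission
  imports Defs
begin


primrec forces :: "('w \<Rightarrow> bool) \<Rightarrow> ('w \<Rightarrow> 'w \<Rightarrow> bool) \<Rightarrow> ('w \<Rightarrow> 'w \<Rightarrow> bool) \<Rightarrow> (nat \<Rightarrow> 'w \<Rightarrow> bool) \<Rightarrow> 'w \<Rightarrow> form \<Rightarrow> bool" where
  "forces W le R V x (Var p) = V p x"
| "forces W le R V x Bot = False"
| "forces W le R V x (And a b) = (forces W le R V x a \<and> forces W le R V x b)"
| "forces W le R V x (Or a b) = (forces W le R V x a \<or> forces W le R V x b)"
| "forces W le R V x (Imp a b) = (\<forall>y. W y \<longrightarrow> le x y \<longrightarrow> forces W le R V y a \<longrightarrow> forces W le R V y b)"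
| "forces W le R V x (Box a) = (\<forall>y. W y \<longrightarrow> R x y \<longrightarrow> forces W le R V y a)"

definition frame :: "('w \<Rightarrow> bool) \<Rightarrow> ('w \<Rightarrow> 'w \<Rightarrow> bool) \<Rightarrow> ('w \<Rightarrow> 'w \<Rightarrow> bool) \<Rightarrow> (nat \<Rightarrow> 'w \<Rightarrow> bool) \<Rightarrow> bool" where
  "frame W le R V \<longleftrightarrow> finite (Collect W) \<and> (\<forall>x. W x \<longrightarrow> le x x)
    \<and> (\<forall>x y z. W x \<longrightarrow> W y \<longrightarrow> W z \<longrightarrow> le x y \<longrightarrow> le y z \<longrightarrow> le x z)
    \<and> (\<forall>x y z. W x \<longrightarrow> W y \<longrightarrow> W z \<longrightarrow> R x y \<longrightarrow> R y z \<longrightarrow> R x z)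
    \<and> (\<forall>x y. W x \<longrightarrow> W y \<longrightarrow> R x y \<longrightarrow> le x y)
    \<and> (\<forall>x y z. W x \<longrightarrow> W y \<longrightarrow> W z \<longrightarrow> le x y \<longrightarrow> R y z \<longrightarrow> R x z)
    \<and> (\<forall>x. W x \<longrightarrow> \<not> R x x)
    \<and> (\<forall>p x y. W x \<longrightarrow> W y \<longrightarrow> le x y \<longrightarrow> V p x \<longrightarrow> V p y)"

context
  fixes W le R V
  assumes fr: "frame W le R V"
begin

lemmas frx = fr[unfolded frame_def]

lemma fr_fin: "finite (Collect W)" using frx by simp
lemma fr_refl: "W x \<Longrightarrow> le x x"
  using frx[THEN conjunct2, THEN conjunct1] by blast
lemma fr_trans: "W x \<Longrightarrow> W y \<Longrightarrow> W z \<Longrightarrow> le x y \<Longrightarrow> le y z \<Longrightarrow> le x z"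
  using frx[THEN conjunct2, THEN conjunct2, THEN conjunct1] by blast
lemma fr_Rtrans: "W x \<Longrightarrow> W y \<Longrightarrow> W z \<Longrightarrow> R x y \<Longrightarrow> R y z \<Longrightarrow> R x z"
  using frx[THEN conjunct2, THEN conjunct2, THEN conjunct2, THEN conjunct1] by blast
lemma fr_Rle: "W x \<Longrightarrow> W y \<Longrightarrow> R x y \<Longrightarrow> le x y"
  using frx[THEN conjunct2, THEN conjunct2, THEN conjunct2, THEN conjunct2, THEN conjunct1] by blast
lemma fr_leR: "W x \<Longrightarrow> W y \<Longrightarrow> W z \<Longrightarrow> le x y \<Longrightarrow> R y z \<Longrightarrow> R x z"
  using frx[THEN conjunct2, THEN conjunct2, THEN conjunct2, THEN conjunct2, THEN conjunct2, THEN conjunct1] by blast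
lemma fr_irr: "W x \<Longrightarrow> \<not> R x x"
  using frx[THEN conjunct2, THEN conjunct2, THEN conjunct2, THEN conjunct2, THEN conjunct2, THEN conjunct2, THEN conjunct1] by blast
lemma fr_V: "W x \<Longrightarrow> W y \<Longrightarrow> le x y \<Longrightarrow> V p x \<Longrightarrow> V p y"
  using frx[THEN conjunct2, THEN conjunct2, THEN conjunct2, THEN conjunct2, THEN conjunct2, THEN conjunct2, THEN conjunct2] by blast

lemma persist: "W x \<Longrightarrow> W y \<Longrightarrow> le x y \<Longrightarrow> forces W le R V x A \<Longrightarrow> forces W le R V y A"
proof (induction A arbitrary: x y)
  case (Var p) then show ?case using fr_V by simp
next
  case (Imp a b)
  show ?case unfolding forces.simps
  proof (intro allI impI)
    fix z assume "W z" "le y z" "forces W le R V z a"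
    then show "forces W le R V z b"
      using Imp.prems fr_trans[of x y z] by simp
  qed
next
  case (Box a)
  show ?case unfolding forces.simps
  proof (intro allI impI)
    fix z assume "W z" "R y z"
    then show "forces W le R V z a"
      using Box.prems fr_leR[of x y z] by simp
  qed
qed auto

lemma wfR: "wf {(z', z). W z \<and> W z' \<and> R z z'}" (is "wf ?S")
proof (rule finite_acyclic_wf)
  have "?S \<subseteq> Collect W \<times> Collect W" by auto
  then show "finite ?S" using fr_fin by (meson finite_SigmaI finite_subset)
  have "trans ?S" unfolding trans_def using fr_Rtrans by blast
  then have "?S\<^sup>+ = ?S" by (rule trancl_id)
  then show "acyclic ?S" unfolding acyclic_def using fr_irr by auto
qed

lemma lob_sound:
  assumes "W y" "forces W le R V y (Box (Imp (Box A) A))"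
  shows "forces W le R V y (Box A)"
proof -
  have "\<forall>z. W z \<longrightarrow> R y z \<longrightarrow> forces W le R V z A"
  proof (intro allI)
    fix z
    show "W z \<longrightarrow> R y z \<longrightarrow> forces W le R V z A"
    proof (induction z rule: wf_induct[OF wfR])
      case (1 z)
      show ?case
      proof (intro impI)
        assume z: "W z" "R y z"
        have "forces W le R V z (Box A)"
          using 1 z fr_Rtrans[OF \<open>W y\<close> z(1)] assms(1) by auto
        moreover have "forces W le R V z (Imp (Box A) A)" using assms(2) z by auto
        ultimately show "forces W le R V z A" using z fr_refl by auto
      qed
    qed
  qed
  then show ?thesis by simp
qed

theorem soundness: "LC_prf A \<Longrightarrow> W x \<Longrightarrow> forces W le R V x A"
proof (induction A arbitrary: x rule: LC_prf.induct)
  case (ax_K A B)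
  show ?case unfolding forces.simps
  proof (intro allI impI)
    fix y z assume "W y" "le x y" "forces W le R V y A" "W z" "le y z" "forces W le R V z B"
    then show "forces W le R V z A" using persist[of y z A] by blast
  qed
next
  case (ax_S A B C)
  show ?case unfolding forces.simps
  proof (intro allI impI)
    fix y z u
    assume y: "W y" "le x y" "\<forall>z. W z \<longrightarrow> le y z \<longrightarrow> forces W le R V z A \<longrightarrow>
          (\<forall>u. W u \<longrightarrow> le z u \<longrightarrow> forces W le R V u B \<longrightarrow> forces W le R V u C)"
    assume z: "W z" "le y z" "\<forall>u. W u \<longrightarrow> le z u \<longrightarrow> forces W le R V u A \<longrightarrow> forces W le R V u B"
    assume u: "W u" "le z u" "forces W le R V u A"
    have "le y u" using fr_trans[of y z u] y z u by blast
    moreover have "forces W le R V u B" using z u by blast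
    ultimately show "forces W le R V u C" using y u fr_refl[of u] by blast
  qed
next
  case (ax_andI A B)
  show ?case unfolding forces.simps
  proof (intro allI impI)
    fix y z assume "W y" "le x y" "forces W le R V y A" "W z" "le y z" "forces W le R V z B"
    then show "forces W le R V z A \<and> forces W le R V z B" using persist[of y z A] by blast
  qed
next
  case (ax_orE A C B)
  show ?case unfolding forces.simps
  proof (intro allI impI)
    fix y z u
    assume y: "W y" "le x y" "\<forall>z. W z \<longrightarrow> le y z \<longrightarrow> forces W le R V z A \<longrightarrow> forces W le R V z C"
    assume z: "W z" "le y z" "\<forall>u. W u \<longrightarrow> le z u \<longrightarrow> forces W le R V u B \<longrightarrow> forces W le R V u C"
    assume u: "W u" "le z u" "forces W le R V u A \<or> forces W le R V u B"
    have "le y u" using fr_trans[of y z u] y z u by blast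
    then show "forces W le R V u C" using y z u by blast
  qed
next
  case (ax_boxK A B)
  show ?case unfolding forces.simps
  proof (intro allI impI)
    fix y z u
    assume y: "W y" "le x y" "\<forall>u. W u \<longrightarrow> R y u \<longrightarrow> (\<forall>v. W v \<longrightarrow> le u v \<longrightarrow> forces W le R V v A \<longrightarrow> forces W le R V v B)"
    assume z: "W z" "le y z" "\<forall>u. W u \<longrightarrow> R z u \<longrightarrow> forces W le R V u A"
    assume u: "W u" "R z u"
    have "R y u" using fr_leR[of y z u] y z u by blast
    then show "forces W le R V u B" using y z u fr_refl[of u] by blast
  qed
next
  case (ax_box4 A)
  show ?case unfolding forces.simps
  proof (intro allI impI)
    fix y z u
    assume y: "W y" "le x y" "\<forall>u. W u \<longrightarrow> R y u \<longrightarrow> forces W le R V u A"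
    assume z: "W z" "R y z" "W u" "R z u"
    then show "forces W le R V u A" using y fr_Rtrans[of y z u] by blast
  qed
next
  case (ax_lob A)
  show ?case unfolding forces.simps(5)
  proof (intro allI impI)
    fix y assume "W y" "le x y" "forces W le R V y (Box (Imp (Box A) A))"
    then show "forces W le R V y (Box A)" using lob_sound by blast
  qed
next
  case (ax_comp A)
  show ?case unfolding forces.simps
  proof (intro allI impI)
    fix y z assume "W y" "le x y" "forces W le R V y A" "W z" "R y z"
    then show "forces W le R V z A" using persist[of y z A] fr_Rle[of y z] by blast
  qed
next
  case (mp A B) then show ?case using fr_refl by auto
qed auto

end


inductive D :: "form set \<Rightarrow> form \<Rightarrow> bool" for G where
  D_ax: "LC_prf A \<Longrightarrow> D G A"
| D_hyp: "A \<in> G \<Longrightarrow> D G A"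
| D_mp: "D G (Imp A B) \<Longrightarrow> D G A \<Longrightarrow> D G B"

lemma D_mono: "D G A \<Longrightarrow> G \<subseteq> H \<Longrightarrow> D H A"
  by (induction rule: D.induct) (auto intro: D.intros)

lemma LC_I: "LC_prf (Imp A A)"
  by (meson ax_K ax_S mp)

lemma deduction: "D (insert A G) B \<Longrightarrow> D G (Imp A B)"
proof (induction rule: D.induct)
  case (D_ax C) then show ?case by (meson D.D_ax D_mp ax_K)
next
  case (D_hyp C)
  then show ?case
  proof
    assume "C = A" then show ?thesis using LC_I D.D_ax by blast
  next
    assume "C \<in> G" then show ?thesis by (meson D.D_ax D.D_hyp D_mp ax_K)
  qed
next
  case (D_mp C E) then show ?case by (meson D.D_ax D.D_mp ax_S)
qed

lemma D_imp_mp: "D G (Imp A B) \<Longrightarrow> D (insert A G) B"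
  by (meson D.D_hyp D.D_mp D_mono insertI1 subset_insertI)

lemma D_box: "D H F \<Longrightarrow> (\<forall>h\<in>H. D G (Box h)) \<Longrightarrow> D G (Box F)"
proof (induction rule: D.induct)
  case (D_ax A) then show ?case by (simp add: D.D_ax nec)
next
  case (D_hyp A) then show ?case by blast
next
  case (D_mp A B) then show ?case by (meson D.D_ax D.D_mp ax_boxK)
qed

lemma D_ax_mp: "LC_prf (Imp A B) \<Longrightarrow> D G A \<Longrightarrow> D G B"
  by (meson D.D_ax D.D_mp)

primrec sub :: "form \<Rightarrow> form set" where
  "sub (Var p) = {Var p}"
| "sub Bot = {Bot}"
| "sub (And a b) = insert (And a b) (sub a \<union> sub b)"
| "sub (Or a b) = insert (Or a b) (sub a \<union> sub b)"
| "sub (Imp a b) = insert (Imp a b) (sub a \<union> sub b)"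
| "sub (Box a) = insert (Box a) (sub a)"

lemma finite_sub: "finite (sub A)" by (induction A) auto
lemma sub_self: "A \<in> sub A" by (cases A) auto
lemma sub_trans: "B \<in> sub A \<Longrightarrow> sub B \<subseteq> sub A" by (induction A) auto

definition prime :: "form \<Rightarrow> form set \<Rightarrow> bool" where
  "prime A G \<longleftrightarrow> G \<subseteq> sub A \<and> \<not> D G Bot \<and> (\<forall>B\<in>sub A. D G B \<longrightarrow> B \<in> G)
     \<and> (\<forall>B C. Or B C \<in> G \<longrightarrow> B \<in> G \<or> C \<in> G)"

lemma lindenbaum:
  assumes "G \<subseteq> sub A" "\<not> D G B0"
  shows "\<exists>H. prime A H \<and> G \<subseteq> H \<and> \<not> D H B0"
proof -
  let ?S = "{H. G \<subseteq> H \<and> H \<subseteq> sub A \<and> \<not> D H B0}"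
  have "?S \<subseteq> Pow (sub A)" by auto
  then have "finite ?S" using finite_sub by (meson finite_Pow_iff finite_subset)
  moreover have "G \<in> ?S" using assms by auto
  ultimately obtain H where H: "H \<in> ?S" and max: "\<forall>K\<in>?S. H \<le> K \<longrightarrow> H = K"
    using finite_has_maximal[of ?S] by blast
  have noD: "\<not> D H B0" using H by auto
  have ext: "D (insert C H) B0" if "C \<in> sub A" "C \<notin> H" for C
  proof (rule ccontr)
    assume "\<not> D (insert C H) B0"
    then have "insert C H \<in> ?S" using H that(1) by auto
    then show False using max that(2) by blast
  qed
  have closed: "\<forall>C\<in>sub A. D H C \<longrightarrow> C \<in> H"
  proof (intro ballI impI, rule ccontr)
    fix C assume C: "C \<in> sub A" "D H C" "C \<notin> H"
    then have "D H (Imp C B0)" using ext deduction by blast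
    then show False using C(2) D_mp noD by blast
  qed
  have bot: "\<not> D H Bot" using noD by (meson D_ax_mp ax_efq)
  have pr: "\<forall>B C. Or B C \<in> H \<longrightarrow> B \<in> H \<or> C \<in> H"
  proof (intro allI impI, rule ccontr)
    fix B C assume o: "Or B C \<in> H" and n: "\<not> (B \<in> H \<or> C \<in> H)"
    have "Or B C \<in> sub A" using o H by auto
    then have sub: "B \<in> sub A" "C \<in> sub A" using sub_trans[of "Or B C" A] sub_self[of B] sub_self[of C] by auto
    have "D H (Imp B B0)" "D H (Imp C B0)" using ext sub n deduction by blast+
    moreover have "D H (Or B C)" using o by (rule D_hyp)
    ultimately have "D H B0" by (meson D_ax_mp D_mp ax_orE)
    then show False using noD by blast
  qed
  show ?thesis unfolding prime_def using H closed bot pr by blast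
qed

lemma sub_sub: "B \<in> sub A \<Longrightarrow> C \<in> sub B \<Longrightarrow> C \<in> sub A"
  using sub_trans by blast

lemma prime_closed: "prime A G \<Longrightarrow> B \<in> sub A \<Longrightarrow> D G B \<Longrightarrow> B \<in> G"
  unfolding prime_def by blast

lemma prime_sub: "prime A G \<Longrightarrow> G \<subseteq> sub A"
  unfolding prime_def by blast

definition Rc :: "form set \<Rightarrow> form set \<Rightarrow> bool" where
  "Rc G H \<longleftrightarrow> G \<subset> H \<and> (\<forall>C. Box C \<in> G \<longrightarrow> C \<in> H)"

definition Vc :: "nat \<Rightarrow> form set \<Rightarrow> bool" where
  "Vc p G \<longleftrightarrow> Var p \<in> G"

lemma truth:
  "B \<in> sub A \<Longrightarrow> prime A G \<Longrightarrow> forces (prime A) (\<subseteq>) Rc Vc G B \<longleftrightarrow> B \<in> G"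
proof (induction B arbitrary: G)
  case (Var p) then show ?case by (simp add: Vc_def)
next
  case Bot then show ?case unfolding prime_def using D_hyp by auto
next
  case (And a b)
  have s: "a \<in> sub A" "b \<in> sub A" using And.prems(1) sub_sub[of "And a b" A] sub_self by auto
  have "And a b \<in> G \<longleftrightarrow> a \<in> G \<and> b \<in> G"
  proof
    assume "And a b \<in> G"
    then have "D G (And a b)" by (rule D_hyp)
    then show "a \<in> G \<and> b \<in> G" using prime_closed[OF And.prems(2)] s
      by (meson D_ax_mp ax_and1 ax_and2)
  next
    assume "a \<in> G \<and> b \<in> G"
    then have "D G (And a b)" by (meson D_ax_mp D_hyp D_mp ax_andI)
    then show "And a b \<in> G" using prime_closed[OF And.prems(2) And.prems(1)] by blast
  qed
  then show ?case using And s by simp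
next
  case (Or a b)
  have s: "a \<in> sub A" "b \<in> sub A" using Or.prems(1) sub_sub[of "Or a b" A] sub_self by auto
  have "Or a b \<in> G \<longleftrightarrow> a \<in> G \<or> b \<in> G"
  proof
    assume "Or a b \<in> G" then show "a \<in> G \<or> b \<in> G" using Or.prems(2) unfolding prime_def by blast
  next
    assume "a \<in> G \<or> b \<in> G"
    then have "D G (Or a b)" by (meson D_ax_mp D_hyp ax_or1 ax_or2)
    then show "Or a b \<in> G" using prime_closed[OF Or.prems(2) Or.prems(1)] by blast
  qed
  then show ?case using Or s by simp
next
  case (Imp a b)
  have s: "a \<in> sub A" "b \<in> sub A" using Imp.prems(1) sub_sub[of "Imp a b" A] sub_self by auto
  have "forces (prime A) (\<subseteq>) Rc Vc G (Imp a b) \<longleftrightarrow> (\<forall>H. prime A H \<longrightarrow> G \<subseteq> H \<longrightarrow> a \<in> H \<longrightarrow> b \<in> H)"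
    using Imp.IH s by auto
  also have "\<dots> \<longleftrightarrow> Imp a b \<in> G"
  proof
    assume all: "\<forall>H. prime A H \<longrightarrow> G \<subseteq> H \<longrightarrow> a \<in> H \<longrightarrow> b \<in> H"
    show "Imp a b \<in> G"
    proof (rule ccontr)
      assume n: "Imp a b \<notin> G"
      have "\<not> D (insert a G) b"
        using deduction prime_closed[OF Imp.prems(2) Imp.prems(1)] n by blast
      moreover have "insert a G \<subseteq> sub A" using s prime_sub[OF Imp.prems(2)] by auto
      ultimately obtain H where "prime A H" "insert a G \<subseteq> H" "\<not> D H b"
        using lindenbaum by blast
      then show False using all D_hyp by blast
    qed
  next
    assume i: "Imp a b \<in> G"
    show "\<forall>H. prime A H \<longrightarrow> G \<subseteq> H \<longrightarrow> a \<in> H \<longrightarrow> b \<in> H"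
    proof (intro allI impI)
      fix H assume H: "prime A H" "G \<subseteq> H" "a \<in> H"
      then have "D H b" using i by (meson D_hyp D_mp subsetD)
      then show "b \<in> H" using prime_closed[OF H(1) s(2)] by blast
    qed
  qed
  finally show ?case .
next
  case (Box a)
  have s: "a \<in> sub A" using Box.prems(1) sub_sub[of "Box a" A] sub_self by auto
  have "forces (prime A) (\<subseteq>) Rc Vc G (Box a) \<longleftrightarrow> (\<forall>H. prime A H \<longrightarrow> Rc G H \<longrightarrow> a \<in> H)"
    using Box.IH s by auto
  also have "\<dots> \<longleftrightarrow> Box a \<in> G"
  proof
    assume all: "\<forall>H. prime A H \<longrightarrow> Rc G H \<longrightarrow> a \<in> H"
    show "Box a \<in> G"
    proof (rule ccontr)
      assume n: "Box a \<notin> G"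
      let ?X = "{C. Box C \<in> G}"
      let ?G' = "insert (Box a) (G \<union> ?X)"
      have nd: "\<not> D ?G' a"
      proof
        assume "D ?G' a"
        then have "D (G \<union> ?X) (Imp (Box a) a)" by (rule deduction)
        moreover have "\<forall>h\<in>G \<union> ?X. D G (Box h)"
          by (auto intro: D_hyp D_ax_mp[OF ax_comp])
        ultimately have "D G (Box (Imp (Box a) a))" by (rule D_box)
        then have "D G (Box a)" by (rule D_ax_mp[OF ax_lob])
        then show False using n prime_closed[OF Box.prems(2) Box.prems(1)] by blast
      qed
      have "?X \<subseteq> sub A"
      proof
        fix C assume "C \<in> ?X"
        then have "Box C \<in> sub A" using prime_sub[OF Box.prems(2)] by auto
        then show "C \<in> sub A" using sub_sub[of "Box C" A C] sub_self by auto
      qed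
      then have "?G' \<subseteq> sub A" using Box.prems(1) prime_sub[OF Box.prems(2)] by auto
      then obtain H where H: "prime A H" "?G' \<subseteq> H" "\<not> D H a"
        using lindenbaum nd by blast
      have "Rc G H" unfolding Rc_def using H(2) n by auto
      then show False using all H D_hyp by blast
    qed
  next
    assume i: "Box a \<in> G"
    then show "\<forall>H. prime A H \<longrightarrow> Rc G H \<longrightarrow> a \<in> H" unfolding Rc_def by blast
  qed
  finally show ?case .
qed


definition rcomp :: "nat \<Rightarrow> (nat list \<Rightarrow> nat) \<Rightarrow> bool" where
  "rcomp n f \<longleftrightarrow> (\<exists>r. \<forall>xs. length xs = n \<longrightarrow> rec_eval r xs (f xs))"

lemma comp_cong: "rcomp n f \<Longrightarrow> (\<And>xs. length xs = n \<Longrightarrow> f xs = g xs) \<Longrightarrow> rcomp n g"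
  unfolding rcomp_def by metis

lemma comp_proj: "i < n \<Longrightarrow> rcomp n (\<lambda>xs. xs ! i)"
  unfolding rcomp_def by (rule exI[of _ "Proj i"]) (auto intro: rec_eval.intros)

fun constr :: "nat \<Rightarrow> recf" where
  "constr 0 = Zero"
| "constr (Suc c) = Comp Succ [constr c]"

lemma rec_eval_constr: "rec_eval (constr c) xs c"
proof (induction c)
  case 0 then show ?case by (auto intro: rec_eval.intros)
next
  case (Suc c)
  show ?case unfolding constr.simps
    by (rule ev_comp[where ys="[c]"]) (use Suc in \<open>auto intro: rec_eval.intros\<close>)
qed

lemma comp_const: "rcomp n (\<lambda>_. c)"
  unfolding rcomp_def using rec_eval_constr by blast

lemma choose_list:
  assumes "\<forall>g\<in>set gs. \<exists>r. P g r"
  shows "\<exists>rs. length rs = length gs \<and> (\<forall>i<length gs. P (gs ! i) (rs ! i))"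
  using assms
proof (induction gs)
  case Nil then show ?case by auto
next
  case (Cons g gs)
  then obtain rs where rs: "length rs = length gs" "\<forall>i<length gs. P (gs ! i) (rs ! i)" by auto
  from Cons obtain r where "P g r" by auto
  with rs show ?case
    by (intro exI[of _ "r # rs"]) (auto simp: nth_Cons split: nat.splits)
qed

lemma comp_compose:
  assumes f: "rcomp (length gs) f" and gs: "\<forall>g\<in>set gs. rcomp n g"
  shows "rcomp n (\<lambda>xs. f (map (\<lambda>g. g xs) gs))"
proof -
  from f obtain rf where rf: "\<forall>ys. length ys = length gs \<longrightarrow> rec_eval rf ys (f ys)"
    unfolding rcomp_def by blast
  from gs have "\<forall>g\<in>set gs. \<exists>r. \<forall>xs. length xs = n \<longrightarrow> rec_eval r xs (g xs)"
    unfolding rcomp_def by blast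
  from choose_list[OF this] obtain rs where rs: "length rs = length gs"
    "\<forall>i<length gs. \<forall>xs. length xs = n \<longrightarrow> rec_eval (rs ! i) xs ((gs ! i) xs)" by blast
  show ?thesis unfolding rcomp_def
  proof (intro exI allI impI)
    fix xs :: "nat list" assume "length xs = n"
    show "rec_eval (Comp rf rs) xs (f (map (\<lambda>g. g xs) gs))"
      by (rule ev_comp[where ys="map (\<lambda>g. g xs) gs"]) (use rs rf \<open>length xs = n\<close> in auto)
  qed
qed

lemma comp_prim:
  assumes f: "rcomp n f0" and g: "rcomp (Suc (Suc n)) g"
  shows "rcomp (Suc n) (\<lambda>ys. rec_nat (f0 (tl ys)) (\<lambda>m acc. g (m # acc # tl ys)) (hd ys))"
proof -
  from f obtain rf where rf: "\<forall>ys. length ys = n \<longrightarrow> rec_eval rf ys (f0 ys)"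
    unfolding rcomp_def by blast
  from g obtain rg where rg: "\<forall>ys. length ys = Suc (Suc n) \<longrightarrow> rec_eval rg ys (g ys)"
    unfolding rcomp_def by blast
  have *: "rec_eval (Prim rf rg) (m # xs) (rec_nat (f0 xs) (\<lambda>m acc. g (m # acc # xs)) m)"
    if "length xs = n" for m xs
  proof (induction m)
    case 0 then show ?case using rf that by (auto intro: ev_prim0)
  next
    case (Suc m) then show ?case using rg that by (auto intro: ev_primS)
  qed
  show ?thesis unfolding rcomp_def
  proof (intro exI allI impI)
    fix ys :: "nat list" assume "length ys = Suc n"
    then obtain m xs where "ys = m # xs" "length xs = n" by (cases ys) auto
    then show "rec_eval (Prim rf rg) ys (rec_nat (f0 (tl ys)) (\<lambda>m acc. g (m # acc # tl ys)) (hd ys))"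
      using * by simp
  qed
qed

lemma comp_succ1: "rcomp (Suc 0) (\<lambda>xs. Suc (xs ! 0))"
proof -
  have "\<forall>xs. length xs = Suc 0 \<longrightarrow> rec_eval Succ xs (Suc (xs ! 0))"
  proof (intro allI impI)
    fix xs :: "nat list" assume "length xs = Suc 0"
    then obtain x where "xs = [x]" by (cases xs) auto
    then show "rec_eval Succ xs (Suc (xs ! 0))" by (auto intro: ev_succ)
  qed
  then show ?thesis unfolding rcomp_def by blast
qed

lemma comp_add2: "rcomp 2 (\<lambda>xs. xs ! 0 + xs ! 1)"
proof -
  have "rcomp (Suc 1) (\<lambda>ys. rec_nat ((\<lambda>xs. xs!0) (tl ys)) (\<lambda>m acc. (\<lambda>zs. Suc (zs ! 1)) (m # acc # tl ys)) (hd ys))"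
  proof (rule comp_prim)
    show "rcomp 1 (\<lambda>xs. xs ! 0)" by (rule comp_proj) simp
    have "rcomp 3 (\<lambda>xs. (\<lambda>zs. Suc (zs!0)) (map (\<lambda>g. g xs) [\<lambda>xs. xs!1]))"
      by (rule comp_compose) (auto intro: comp_proj comp_succ1)
    then show "rcomp (Suc (Suc 1)) (\<lambda>zs. Suc (zs ! 1))" by (simp add: numeral_eq_Suc)
  qed
  moreover have "rec_nat (xs!0) (\<lambda>m acc. Suc acc) m = m + xs!0" for m xs by (induction m) auto
  ultimately have "rcomp (Suc 1) (\<lambda>xs. xs ! 0 + xs ! 1)"
    by (elim comp_cong) (auto simp: length_Suc_conv)
  then show ?thesis by (simp add: numeral_eq_Suc)
qed

lemma map_proj: "length xs = n \<Longrightarrow> map (\<lambda>g. g xs) (map (\<lambda>i xs. xs ! i) [0..<n]) = xs"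
  by (simp add: o_def) (metis map_nth)

lemma comp_add2': "rcomp (Suc (Suc 0)) (\<lambda>xs. xs ! 0 + xs ! Suc 0)"
  using comp_add2 by (simp add: numeral_2_eq_2)

datatype ex = V nat | K nat | Plus ex ex | Rec ex ex ex

primrec eval :: "ex \<Rightarrow> nat list \<Rightarrow> nat" where
  "eval (V i) env = (if i < length env then env ! i else 0)"
| "eval (K c) env = c"
| "eval (Plus a b) env = eval a env + eval b env"
| "eval (Rec b z s) env = rec_nat (eval z env) (\<lambda>m acc. eval s (m # acc # env)) (eval b env)"

primrec wfe :: "nat \<Rightarrow> ex \<Rightarrow> bool" where
  "wfe n (V i) = (i < n)"
| "wfe n (K c) = True"
| "wfe n (Plus a b) = (wfe n a \<and> wfe n b)"
| "wfe n (Rec b z s) = (wfe n b \<and> wfe n z \<and> wfe (Suc (Suc n)) s)"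

primrec shift :: "nat \<Rightarrow> ex \<Rightarrow> ex" where
  "shift k (V i) = (if i < k then V i else V (Suc i))"
| "shift k (K c) = K c"
| "shift k (Plus a b) = Plus (shift k a) (shift k b)"
| "shift k (Rec b z s) = Rec (shift k b) (shift k z) (shift (Suc (Suc k)) s)"

lemma eval_shift: "k \<le> length env \<Longrightarrow> eval (shift k e) (take k env @ x # drop k env) = eval e env"
proof (induction e arbitrary: k env)
  case (V i)
  then show ?case
    by (auto simp: nth_append min_def nth_Cons' split: if_splits)
next
  case (Rec b z s)
  have "eval (shift (Suc (Suc k)) s) (m # acc # take k env @ x # drop k env) = eval s (m # acc # env)" for m acc
    using Rec.IH(3)[of "Suc (Suc k)" "m # acc # env"] Rec.prems by simp
  then show ?case using Rec by simp
qed auto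

lemma eval_shift0[simp]: "eval (shift 0 e) (x # env) = eval e env"
  using eval_shift[of 0 env e x] by simp

lemma eval_shift1[simp]: "eval (shift 1 e) (y # x # env) = eval e (y # env)"
  using eval_shift[of 1 "y # env" e x] by simp

lemma eval_shift1'[simp]: "eval (shift (Suc 0) e) (y # x # env) = eval e (y # env)"
  using eval_shift1 by simp

lemma eval_V0[simp]: "eval (V 0) (x # env) = x" by simp
lemma eval_VSuc[simp]: "eval (V (Suc i)) (x # env) = eval (V i) env" by simp

lemma eval_V1[simp]: "eval (V 1) (y # x # env) = x" by simp

lemma wfe_shift[simp]: "k \<le> n \<Longrightarrow> wfe (Suc n) (shift k e) = wfe n e"
  by (induction e arbitrary: k n) auto

lemma wfe_mono: "wfe n e \<Longrightarrow> n \<le> m \<Longrightarrow> wfe m e"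
  by (induction e arbitrary: n m) auto

lemma comp_eval: "wfe n e \<Longrightarrow> rcomp n (eval e)"
proof (induction e arbitrary: n)
  case (V i) then show ?case by (auto intro: comp_cong[OF comp_proj])
next
  case (K c) then show ?case by (simp add: comp_const)
next
  case (Plus a b)
  then have "rcomp n (\<lambda>xs. (\<lambda>ys. ys!0 + ys!1) (map (\<lambda>g. g xs) [eval a, eval b]))"
    by (intro comp_compose) (auto intro: comp_add2')
  then show ?case by simp
next
  case (Rec b z s)
  then have P: "rcomp (Suc n) (\<lambda>ys. rec_nat (eval z (tl ys)) (\<lambda>m acc. eval s (m # acc # tl ys)) (hd ys))"
    by (intro comp_prim) auto
  have "rcomp n (\<lambda>xs. (\<lambda>ys. rec_nat (eval z (tl ys)) (\<lambda>m acc. eval s (m # acc # tl ys)) (hd ys))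
             (map (\<lambda>g. g xs) (eval b # map (\<lambda>i xs. xs ! i) [0..<n])))"
    by (rule comp_compose) (use P Rec in \<open>auto intro: comp_proj\<close>)
  then show ?case
    by (rule comp_cong) (simp add: o_def, metis map_nth)
qed


definition "EPred e = Rec e (K 0) (V 0)"
definition "ESub a b = Rec b a (EPred (V 1))"
definition "EMul a b = Rec a (K 0) (Plus (V 1) (shift 0 (shift 0 b)))"
definition "EPow2 e = Rec e (K 1) (EMul (K 2) (V 1))"
definition "ESum b t = Rec b (K 0) (Plus (V 1) (shift 1 t))"
definition "ELet e body = Rec (K 1) e (shift 0 body)"
definition "ENot e = ESub (K 1) e"
definition "ESg e = ENot (ENot e)"
definition "EConj a b = ESg (EMul a b)"
definition "EImp a b = ENot (EMul a (ENot b))"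
definition "ELe a b = ENot (ESub a b)"
definition "EEq a b = EConj (ELe a b) (ELe b a)"
definition "EForall b t = ENot (ESum b (ENot t))"
definition "EDiv a d = ESum a (ELe (EMul (shift 0 d) (Plus (V 0) (K 1))) (shift 0 a))"
definition "EMem x s = ELet (EDiv s (EPow2 x)) (ENot (EEq (EMul (K 2) (EDiv (V 0) (K 2))) (V 0)))"
definition "ETri e = ESum (Plus e (K 1)) (V 0)"
definition "EPenc a b = Plus (ETri (Plus a b)) a"
definition "EDfst c = ESum (Plus c (K 1)) (ESum (Plus (shift 0 c) (K 1))
    (EMul (V 1) (EEq (EPenc (V 1) (V 0)) (shift 0 (shift 0 c)))))"
definition "EDsnd c = ESum (Plus c (K 1)) (ESum (Plus (shift 0 c) (K 1))
    (EMul (V 0) (EEq (EPenc (V 1) (V 0)) (shift 0 (shift 0 c)))))"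

lemma wfe_Pred[simp]: "wfe n (EPred e) = wfe n e" by (auto simp add: EPred_def)
lemma wfe_Sub[simp]: "wfe n (ESub a b) = (wfe n a \<and> wfe n b)" by (auto simp add: ESub_def)
lemma wfe_Mul[simp]: "wfe n (EMul a b) = (wfe n a \<and> wfe n b)" by (auto simp add: EMul_def)
lemma wfe_Pow2[simp]: "wfe n (EPow2 a) = wfe n a" by (auto simp add: EPow2_def)
lemma wfe_Sum[simp]: "wfe n (ESum b t) = (wfe n b \<and> wfe (Suc n) t)" by (auto simp add: ESum_def)
lemma wfe_Let[simp]: "wfe n (ELet b t) = (wfe n b \<and> wfe (Suc n) t)" by (auto simp add: ELet_def)
lemma wfe_Not[simp]: "wfe n (ENot a) = wfe n a" by (auto simp add: ENot_def)
lemma wfe_Sg[simp]: "wfe n (ESg a) = wfe n a" by (auto simp add: ESg_def)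
lemma wfe_Conj[simp]: "wfe n (EConj a b) = (wfe n a \<and> wfe n b)" by (auto simp add: EConj_def)
lemma wfe_Imp[simp]: "wfe n (EImp a b) = (wfe n a \<and> wfe n b)" by (auto simp add: EImp_def)
lemma wfe_Le[simp]: "wfe n (ELe a b) = (wfe n a \<and> wfe n b)" by (auto simp add: ELe_def)
lemma wfe_Eq[simp]: "wfe n (EEq a b) = (wfe n a \<and> wfe n b)" by (auto simp add: EEq_def)
lemma wfe_Forall[simp]: "wfe n (EForall b t) = (wfe n b \<and> wfe (Suc n) t)" by (auto simp add: EForall_def)
lemma wfe_Div[simp]: "wfe n (EDiv a b) = (wfe n a \<and> wfe n b)" by (auto simp add: EDiv_def)
lemma wfe_Mem[simp]: "wfe n (EMem a b) = (wfe n a \<and> wfe n b)" by (auto simp add: EMem_def)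
lemma wfe_Tri[simp]: "wfe n (ETri a) = wfe n a" by (auto simp add: ETri_def)
lemma wfe_Penc[simp]: "wfe n (EPenc a b) = (wfe n a \<and> wfe n b)" by (auto simp add: EPenc_def)
lemma wfe_Dfst[simp]: "wfe n (EDfst a) = wfe n a" by (auto simp add: EDfst_def)
lemma wfe_Dsnd[simp]: "wfe n (EDsnd a) = wfe n a" by (auto simp add: EDsnd_def)

lemma eval_Pred[simp]: "eval (EPred e) env = eval e env - 1"
proof -
  have "rec_nat 0 (\<lambda>m acc. m) k = k - 1" for k :: nat by (cases k) auto
  then show ?thesis by (simp add: EPred_def)
qed

lemma eval_Sub[simp]: "eval (ESub a b) env = eval a env - eval b env"
proof -
  have "rec_nat x (\<lambda>m acc. acc - 1) k = x - k" for x k :: nat by (induction k) auto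
  then show ?thesis by (auto simp add: ESub_def)
qed

lemma eval_Mul[simp]: "eval (EMul a b) env = eval a env * eval b env"
proof -
  have "rec_nat 0 (\<lambda>m acc. acc + y) k = k * y" for y k :: nat by (induction k) auto
  then show ?thesis by (simp add: EMul_def)
qed

lemma eval_Pow2[simp]: "eval (EPow2 a) env = 2 ^ eval a env"
proof -
  have "rec_nat 1 (\<lambda>m acc. 2 * acc) k = (2::nat) ^ k" for k :: nat by (induction k) auto
  then show ?thesis by (simp add: EPow2_def)
qed

lemma eval_Sum[simp]: "eval (ESum b t) env = (\<Sum>i<eval b env. eval t (i # env))"
proof -
  have "rec_nat 0 (\<lambda>m acc. acc + eval t (m # env)) k = (\<Sum>i<k. eval t (i # env))" for k
    by (induction k) auto
  then show ?thesis by (simp add: ESum_def)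
qed

lemma eval_Let[simp]: "eval (ELet b t) env = eval t (eval b env # env)"
  by (simp add: ELet_def)

lemma eval_Not[simp]: "eval (ENot a) env = of_bool (eval a env = 0)" by (simp add: ENot_def)
lemma eval_Sg[simp]: "eval (ESg a) env = of_bool (eval a env \<noteq> 0)" by (simp add: ESg_def)
lemma eval_Conj[simp]: "eval (EConj a b) env = of_bool (eval a env \<noteq> 0 \<and> eval b env \<noteq> 0)"
  by (simp add: EConj_def)
lemma eval_Imp[simp]: "eval (EImp a b) env = of_bool (eval a env \<noteq> 0 \<longrightarrow> eval b env \<noteq> 0)"
  by (simp add: EImp_def)
lemma eval_Le[simp]: "eval (ELe a b) env = of_bool (eval a env \<le> eval b env)"
  by (simp add: ELe_def)
lemma eval_Eq[simp]: "eval (EEq a b) env = of_bool (eval a env = eval b env)"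
  by (auto simp add: EEq_def)
lemma eval_Forall[simp]: "eval (EForall b t) env = of_bool (\<forall>i<eval b env. eval t (i # env) \<noteq> 0)"
proof -
  have "((\<Sum>i<eval b env. of_bool (eval t (i # env) = 0)) = (0::nat)) \<longleftrightarrow> (\<forall>i<eval b env. eval t (i # env) \<noteq> 0)"
    by (subst sum_eq_0_iff) auto
  then show ?thesis by (simp only: EForall_def eval_Not eval_Sum)
qed

lemma count_div: "d > 0 \<Longrightarrow> (\<Sum>j<s. of_bool (d * (j + 1) \<le> s)) = (s div d :: nat)"
proof -
  assume d: "d > 0"
  have iff: "j < s div d \<longleftrightarrow> d * (j + 1) \<le> s" for j
    using div_less_iff_less_mult[OF d, of s "j+1"] by (auto simp: mult.commute)
  have "s div d \<le> s" by (rule div_le_dividend)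
  then have e: "{..<s} \<inter> {j. d * (j + 1) \<le> s} = {..<s div d}" using iff
  proof (intro set_eqI)
    fix x show "x \<in> {..<s} \<inter> {j. d * (j + 1) \<le> s} \<longleftrightarrow> x \<in> {..<s div d}"
      using iff[of x] \<open>s div d \<le> s\<close> by (auto intro: less_le_trans)
  qed
  have "(\<Sum>j<s. of_bool (d * (j + 1) \<le> s)) = card ({..<s} \<inter> {j. d * (j + 1) \<le> s})"
    by simp
  then show ?thesis by (simp only: e card_lessThan)
qed

lemma eval_Div[simp]: "eval d env > 0 \<Longrightarrow> eval (EDiv a d) env = eval a env div eval d env"
  unfolding EDiv_def by (simp only: eval_Sum eval_Le eval_Mul eval_shift0 eval_V0 eval.simps(2,3) count_div)

lemma odd_iff2: "(2 * (q div 2) \<noteq> q) = odd (q::nat)" by presburger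

lemma eval_Mem[simp]: "eval (EMem x s) env = of_bool (eval x env \<in> set_decode (eval s env))"
  unfolding EMem_def
  by (simp only: eval_Let eval_Not eval_Eq eval_Mul eval_Div eval_Pow2 eval.simps(2) eval_V0
      zero_less_numeral zero_less_power odd_iff2 set_decode_def mem_Collect_eq of_bool_eq_0_iff)

lemma eval_Tri[simp]: "eval (ETri a) env = triangle (eval a env)"
proof -
  have "(\<Sum>i<Suc k. i) = triangle k" for k by (induction k) auto
  then show ?thesis by (simp add: ETri_def)
qed

lemma eval_Penc[simp]: "eval (EPenc a b) env = prod_encode (eval a env, eval b env)"
  by (simp add: EPenc_def prod_encode_def)

lemma sum_decode:
  fixes f :: "nat \<Rightarrow> nat \<Rightarrow> nat"
  shows "(\<Sum>a<Suc c. \<Sum>b<Suc c. f a b * of_bool (prod_encode (a, b) = c)) = f (fst (prod_decode c)) (snd (prod_decode c))"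
proof -
  obtain x y where xy: "prod_decode c = (x, y)" by fastforce
  then have c: "c = prod_encode (x, y)" by (metis prod_decode_inverse)
  have eq: "prod_encode (a, b) = c \<longleftrightarrow> a = x \<and> b = y" for a b using c by simp
  have "x < Suc c" "y < Suc c" using c le_prod_encode_1 le_prod_encode_2 by (simp_all add: less_Suc_eq_le)
  then have inner: "(\<Sum>b<Suc c. f a b * of_bool (prod_encode (a, b) = c)) = (if a = x then f a y else 0)" for a
  proof (cases "a = x")
    case True
    have "(\<Sum>b<Suc c. f a b * of_bool (prod_encode (a, b) = c)) = (\<Sum>b<Suc c. if b = y then f a b else 0)"
      by (rule sum.cong) (auto simp: eq True)
    also have "\<dots> = f a y" using \<open>y < Suc c\<close> by (simp add: sum.delta)
    finally show ?thesis using True by simp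
  qed (simp add: eq)
  have "(\<Sum>a<Suc c. \<Sum>b<Suc c. f a b * of_bool (prod_encode (a, b) = c)) = (\<Sum>a<Suc c. if a = x then f a y else 0)"
    by (simp only: inner)
  also have "\<dots> = f x y" using \<open>x < Suc c\<close> by (simp add: sum.delta)
  finally show ?thesis by (simp add: xy)
qed

lemma eval_Dfst[simp]: "eval (EDfst c) env = fst (prod_decode (eval c env))"
  unfolding EDfst_def
  using sum_decode[of "\<lambda>a b. a" "eval c env"]
  by (simp only: eval_Sum eval.simps(2,3) eval_shift0 eval_V0 eval_V1 eval_Mul eval_Eq eval_Penc Suc_eq_plus1)

lemma eval_Dsnd[simp]: "eval (EDsnd c) env = snd (prod_decode (eval c env))"
  unfolding EDsnd_def
  using sum_decode[of "\<lambda>a b. b" "eval c env"]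
  by (simp only: eval_Sum eval.simps(2,3) eval_shift0 eval_V0 eval_V1 eval_Mul eval_Eq eval_Penc Suc_eq_plus1)


abbreviation sd :: "nat \<Rightarrow> nat set" where "sd \<equiv> set_decode"

definition leF :: "nat \<Rightarrow> nat \<Rightarrow> nat \<Rightarrow> bool" where
  "leF N s t \<longleftrightarrow> (\<forall>c<Suc N. c \<in> sd s \<longrightarrow> c \<in> sd t)"

definition relF :: "nat \<Rightarrow> nat \<Rightarrow> nat \<Rightarrow> bool" where
  "relF N s t \<longleftrightarrow> leF N s t \<and> s \<noteq> t \<and>
     (\<forall>c<Suc N. c \<in> sd s \<and> fst (prod_decode c) = 5 \<longrightarrow> snd (prod_decode c) \<in> sd t)"

definition WF :: "nat \<Rightarrow> nat \<Rightarrow> nat \<Rightarrow> bool" where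
  "WF M w t \<longleftrightarrow> t < M \<and> t \<in> sd w"

definition VF :: "nat \<Rightarrow> nat \<Rightarrow> bool" where
  "VF p t \<longleftrightarrow> enc (Var p) \<in> sd t"

lemma sd_bound: "t < 2 ^ n \<Longrightarrow> c \<in> sd t \<Longrightarrow> c < n"
proof (rule ccontr)
  assume a: "t < 2 ^ n" "c \<in> sd t" "\<not> c < n"
  then have "(2::nat) ^ n \<le> 2 ^ c" by simp
  then have "t < 2 ^ c" using a by linarith
  then have "t div 2 ^ c = 0" by simp
  then show False using a(2) by (simp add: set_decode_def)
qed

lemma sd_antisym:
  assumes "s < 2 ^ Suc N" "t < 2 ^ Suc N" "leF N s t" "leF N t s"
  shows "s = t"
proof -
  have "sd s = sd t" using assms sd_bound[of s "Suc N"] sd_bound[of t "Suc N"] unfolding leF_def by blast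
  then show ?thesis by (metis set_decode_inverse)
qed

lemma code_frame: "frame (WF (2 ^ Suc N) w) (leF N) (relF N) VF"
  unfolding frame_def
proof (intro conjI allI impI)
  show "finite (Collect (WF (2 ^ Suc N) w))"
    by (rule finite_subset[of _ "{..<2 ^ Suc N}"]) (auto simp: WF_def)
next
  fix x show "leF N x x" by (simp add: leF_def)
next
  fix x y z assume "leF N x y" "leF N y z" then show "leF N x z" by (simp add: leF_def)
next
  fix x y z assume W: "WF (2 ^ Suc N) w x" "WF (2 ^ Suc N) w y" "WF (2 ^ Suc N) w z"
    and r: "relF N x y" "relF N y z"
  have "leF N x z" using r by (simp add: relF_def leF_def)
  moreover have "x \<noteq> z"
  proof
    assume "x = z"
    then have "leF N y x" "leF N x y" using r by (simp_all add: relF_def)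
    then have "x = y" using W sd_antisym[of x N y] by (simp add: WF_def)
    then show False using r by (simp add: relF_def)
  qed
  moreover have "\<forall>c<Suc N. c \<in> sd x \<and> fst (prod_decode c) = 5 \<longrightarrow> snd (prod_decode c) \<in> sd z"
    using r unfolding relF_def leF_def by blast
  ultimately show "relF N x z" by (simp add: relF_def)
next
  fix x y assume "relF N x y" then show "leF N x y" by (simp add: relF_def)
next
  fix x y z assume W: "WF (2 ^ Suc N) w x" "WF (2 ^ Suc N) w y" "WF (2 ^ Suc N) w z"
    and r: "leF N x y" "relF N y z"
  have "leF N x z" using r by (simp add: relF_def leF_def)
  moreover have "x \<noteq> z"
  proof
    assume "x = z"
    then have "leF N y z" "leF N z y" using r by (simp_all add: relF_def)
    then have "y = z" using W sd_antisym[of y N z] by (simp add: WF_def)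
    then show False using r by (simp add: relF_def)
  qed
  moreover have "\<forall>c<Suc N. c \<in> sd x \<and> fst (prod_decode c) = 5 \<longrightarrow> snd (prod_decode c) \<in> sd z"
    using r unfolding relF_def leF_def by blast
  ultimately show "relF N x z" by (simp add: relF_def)
next
  fix x show "\<not> relF N x x" by (simp add: relF_def)
next
  fix p x y assume W: "WF (2 ^ Suc N) w x" "WF (2 ^ Suc N) w y" and l: "leF N x y" and v: "VF p x"
  have "enc (Var p) < Suc N" using W v sd_bound[of x "Suc N" "enc (Var p)"] unfolding WF_def VF_def by blast
  then show "VF p y" using l v by (simp add: leF_def VF_def)
qed

definition newF :: "nat \<Rightarrow> nat \<Rightarrow> nat \<Rightarrow> nat \<Rightarrow> nat \<Rightarrow> nat \<Rightarrow> bool" where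
  "newF N M w c s tab = (let a = fst (prod_decode c); b = snd (prod_decode c);
      x = fst (prod_decode b); y = snd (prod_decode b) in
    if a = 0 then c \<in> sd s
    else if a = 2 then x * M + s \<in> sd tab \<and> y * M + s \<in> sd tab
    else if a = 3 then x * M + s \<in> sd tab \<or> y * M + s \<in> sd tab
    else if a = 4 then (\<forall>t<M. t \<in> sd w \<and> leF N s t \<and> x * M + t \<in> sd tab \<longrightarrow> y * M + t \<in> sd tab)
    else if a = 5 then (\<forall>t<M. t \<in> sd w \<and> relF N s t \<longrightarrow> b * M + t \<in> sd tab)
    else False)"

definition layer :: "nat \<Rightarrow> nat \<Rightarrow> nat \<Rightarrow> nat \<Rightarrow> nat \<Rightarrow> nat" where
  "layer N M w c tab = set_encode {s. s < M \<and> newF N M w c s tab}"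

definition tabF :: "nat \<Rightarrow> nat \<Rightarrow> nat \<Rightarrow> nat \<Rightarrow> nat" where
  "tabF N M w c = rec_nat 0 (\<lambda>c tab. tab + 2 ^ (c * M) * layer N M w c tab) c"

lemma tabF_0[simp]: "tabF N M w 0 = 0" by (simp add: tabF_def)
lemma tabF_Suc[simp]: "tabF N M w (Suc c) = tabF N M w c + 2 ^ (c * M) * layer N M w c (tabF N M w c)"
  by (simp add: tabF_def)

lemma set_encode_bound: "S \<subseteq> {..<n} \<Longrightarrow> set_encode S < 2 ^ n"
proof -
  assume S: "S \<subseteq> {..<n}"
  have "set_encode S \<le> set_encode {..<n}"
    unfolding set_encode_def using S by (intro sum_mono2) auto
  also have "set_encode {..<n} = 2 ^ n - 1"
    unfolding set_encode_def using sum_power2[of n] by (simp only: atLeast0LessThan)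
  finally have "set_encode S \<le> 2 ^ n - 1" .
  moreover have "(0::nat) < 2 ^ n" by simp
  ultimately show ?thesis by linarith
qed

lemma set_encode_shift: "finite B \<Longrightarrow> 2 ^ p * set_encode B = set_encode ((+) p ` B)"
proof -
  assume "finite B"
  have "set_encode ((+) p ` B) = (\<Sum>i\<in>B. 2 ^ (p + i))"
    unfolding set_encode_def by (subst sum.reindex) (auto simp: inj_on_def)
  also have "\<dots> = 2 ^ p * set_encode B"
    unfolding set_encode_def by (simp add: sum_distrib_left power_add)
  finally show ?thesis by simp
qed

lemma sd_add_shift:
  assumes "a < 2 ^ p"
  shows "sd (a + 2 ^ p * b) = sd a \<union> ((+) p ` sd b)"
proof -
  have A: "sd a \<subseteq> {..<p}" using sd_bound[OF assms] by auto
  have "a + 2 ^ p * b = set_encode (sd a) + set_encode ((+) p ` sd b)"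
    using set_encode_shift[of "sd b" p] by simp
  also have "\<dots> = set_encode (sd a \<union> (+) p ` sd b)"
    unfolding set_encode_def using A by (subst sum.union_disjoint) auto
  finally show ?thesis by simp
qed

lemma layer_bound: "layer N M w c tab < 2 ^ M"
  unfolding layer_def by (rule set_encode_bound) auto

lemma sd_layer: "sd (layer N M w c tab) = {s. s < M \<and> newF N M w c s tab}"
  unfolding layer_def by (rule set_encode_inverse) auto

lemma tab_inv:
  "tabF N M w c < 2 ^ (c * M) \<and>
   (\<forall>x<c. \<forall>s<M. x * M + s \<in> sd (tabF N M w c) \<longleftrightarrow> newF N M w x s (tabF N M w x))"
proof (induction c)
  case 0 then show ?case by simp
next
  case (Suc c)
  let ?t = "tabF N M w c" and ?L = "layer N M w c (tabF N M w c)"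
  have b: "?t < 2 ^ (c * M)" using Suc by blast
  have "?t + 2 ^ (c * M) * ?L \<le> (2 ^ (c * M) - 1) + 2 ^ (c * M) * (2 ^ M - 1)"
    using b layer_bound[of N M w c ?t] by (intro add_mono mult_le_mono2) auto
  also have "\<dots> < 2 ^ (Suc c * M)"
  proof -
    have "(2::nat) ^ (c * M) * (2 ^ M - 1) = 2 ^ (c * M + M) - 2 ^ (c * M)"
      by (simp add: power_add right_diff_distrib')
    moreover have "(2::nat) ^ (c * M) \<le> 2 ^ (c * M + M)" by simp
    moreover have "(0::nat) < 2 ^ (c * M)" by simp
    ultimately show ?thesis by (simp add: add.commute)
  qed
  finally have bound: "tabF N M w (Suc c) < 2 ^ (Suc c * M)" by simp
  have sdS: "sd (tabF N M w (Suc c)) = sd ?t \<union> ((+) (c * M) ` sd ?L)"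
    using sd_add_shift[OF b] by simp
  have "x * M + s \<in> sd (tabF N M w (Suc c)) \<longleftrightarrow> newF N M w x s (tabF N M w x)"
    if x: "x < Suc c" and s: "s < M" for x s
  proof (cases "x < c")
    case True
    have "x * M + s < c * M"
    proof -
      have "Suc x * M \<le> c * M" using True by (intro mult_le_mono1) simp
      then show ?thesis using s by simp
    qed
    then have "x * M + s \<notin> (+) (c * M) ` sd ?L" by auto
    then show ?thesis using Suc True s sdS by auto
  next
    case False
    then have xc: "x = c" using x by simp
    have "c * M + s \<notin> sd ?t" using sd_bound[OF b, of "c * M + s"] by auto
    moreover have "c * M + s \<in> (+) (c * M) ` sd ?L \<longleftrightarrow> s \<in> sd ?L" by auto
    ultimately show ?thesis using sdS xc s sd_layer by auto
  qed
  then show ?case using bound by blast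
qed

lemma entry: "x < c \<Longrightarrow> t < M \<Longrightarrow> x * M + t \<in> sd (tabF N M w c) \<longleftrightarrow> newF N M w x t (tabF N M w x)"
  using tab_inv by blast

lemma triangle_ge: "n \<le> triangle n" by (induction n) auto

lemma penc_gt: "0 < x \<Longrightarrow> y < prod_encode (x, y)"
  unfolding prod_encode_def using triangle_ge[of "x + y"] by simp

lemma enc_lt:
  "enc a < enc (And a b)" "enc b < enc (And a b)"
  "enc a < enc (Or a b)" "enc b < enc (Or a b)"
  "enc a < enc (Imp a b)" "enc b < enc (Imp a b)"
  "enc a < enc (Box a)"
proof -
  have "prod_encode (enc a, enc b) < prod_encode (k, prod_encode (enc a, enc b))" if "0 < k" for k
    using penc_gt that by blast
  moreover have "enc a \<le> prod_encode (enc a, enc b)" "enc b \<le> prod_encode (enc a, enc b)"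
    by (rule le_prod_encode_1, rule le_prod_encode_2)
  ultimately show "enc a < enc (And a b)" "enc b < enc (And a b)"
    "enc a < enc (Or a b)" "enc b < enc (Or a b)"
    "enc a < enc (Imp a b)" "enc b < enc (Imp a b)"
    by (simp_all, (meson le_less_trans zero_less_numeral)+)
  show "enc a < enc (Box a)" using penc_gt[of 5 "enc a"] by simp
qed

lemma new_correct:
  "s < M \<Longrightarrow> newF N M w (enc B) s (tabF N M w (enc B)) \<longleftrightarrow> forces (WF M w) (leF N) (relF N) VF s B"
proof (induction B arbitrary: s)
  case (Var p) then show ?case by (simp add: newF_def VF_def)
next
  case Bot then show ?case by (simp add: newF_def)
next
  case (And a b)
  have "(enc a * M + s \<in> sd (tabF N M w (enc (And a b)))) = forces (WF M w) (leF N) (relF N) VF s a"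
    using entry[OF enc_lt(1) And.prems] And.IH(1)[OF And.prems] by simp
  moreover have "(enc b * M + s \<in> sd (tabF N M w (enc (And a b)))) = forces (WF M w) (leF N) (relF N) VF s b"
    using entry[OF enc_lt(2) And.prems] And.IH(2)[OF And.prems] by simp
  ultimately show ?case by (simp add: newF_def Let_def)
next
  case (Or a b)
  have "(enc a * M + s \<in> sd (tabF N M w (enc (Or a b)))) = forces (WF M w) (leF N) (relF N) VF s a"
    using entry[OF enc_lt(3) Or.prems] Or.IH(1)[OF Or.prems] by simp
  moreover have "(enc b * M + s \<in> sd (tabF N M w (enc (Or a b)))) = forces (WF M w) (leF N) (relF N) VF s b"
    using entry[OF enc_lt(4) Or.prems] Or.IH(2)[OF Or.prems] by simp
  ultimately show ?case by (simp add: newF_def Let_def)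
next
  case (Imp a b)
  have A: "t < M \<Longrightarrow> (enc a * M + t \<in> sd (tabF N M w (enc (Imp a b)))) = forces (WF M w) (leF N) (relF N) VF t a" for t
    using entry[OF enc_lt(5)] Imp.IH(1) by simp
  have B: "t < M \<Longrightarrow> (enc b * M + t \<in> sd (tabF N M w (enc (Imp a b)))) = forces (WF M w) (leF N) (relF N) VF t b" for t
    using entry[OF enc_lt(6)] Imp.IH(2) by simp
  have "newF N M w (enc (Imp a b)) s (tabF N M w (enc (Imp a b))) \<longleftrightarrow>
      (\<forall>t<M. t \<in> sd w \<and> leF N s t \<and> enc a * M + t \<in> sd (tabF N M w (enc (Imp a b)))
         \<longrightarrow> enc b * M + t \<in> sd (tabF N M w (enc (Imp a b))))"
    by (simp add: newF_def Let_def)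
  also have "\<dots> \<longleftrightarrow> forces (WF M w) (leF N) (relF N) VF s (Imp a b)"
    using A B by (auto simp: WF_def)
  finally show ?case .
next
  case (Box a)
  have A: "t < M \<Longrightarrow> (enc a * M + t \<in> sd (tabF N M w (enc (Box a)))) = forces (WF M w) (leF N) (relF N) VF t a" for t
    using entry[OF enc_lt(7)] Box.IH by simp
  have "newF N M w (enc (Box a)) s (tabF N M w (enc (Box a))) \<longleftrightarrow>
      (\<forall>t<M. t \<in> sd w \<and> relF N s t \<longrightarrow> enc a * M + t \<in> sd (tabF N M w (enc (Box a))))"
    by (simp add: newF_def Let_def)
  also have "\<dots> \<longleftrightarrow> forces (WF M w) (leF N) (relF N) VF s (Box a)"
    using A by (auto simp: WF_def)
  finally show ?case .
qed

definition decF :: "nat \<Rightarrow> bool" where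
  "decF k = (\<forall>w<2 ^ (2 ^ Suc k). \<forall>s<2 ^ Suc k. s \<in> sd w \<longrightarrow>
      k * 2 ^ Suc k + s \<in> sd (tabF k (2 ^ Suc k) w (Suc k)))"

lemma dec_forces:
  "decF (enc A) \<longleftrightarrow> (\<forall>w<2 ^ (2 ^ Suc (enc A)). \<forall>s<2 ^ Suc (enc A). s \<in> sd w \<longrightarrow>
      forces (WF (2 ^ Suc (enc A)) w) (leF (enc A)) (relF (enc A)) VF s A)"
  unfolding decF_def using entry[of "enc A" "Suc (enc A)"] new_correct by simp

lemma D_empty: "D {} A \<Longrightarrow> LC_prf A"
  by (induction rule: D.induct) (auto intro: LC_prf.mp)

lemma forces_iso:
  assumes W: "\<forall>y. W' y \<longleftrightarrow> (\<exists>x. W x \<and> y = f x)"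
    and le: "\<forall>x y. W x \<longrightarrow> W y \<longrightarrow> le' (f x) (f y) = le x y"
    and R: "\<forall>x y. W x \<longrightarrow> W y \<longrightarrow> R' (f x) (f y) = R x y"
    and VV: "\<forall>p x. W x \<longrightarrow> V2 p (f x) = V1 p x"
  shows "W x \<Longrightarrow> forces W' le' R' V2 (f x) A = forces W le R V1 x A"
proof (induction A arbitrary: x)
  case (Imp a b) then show ?case using W le by (auto; metis)
next
  case (Box a) then show ?case using W R by (auto; metis)
qed (use VV in auto)

lemma enc_inj: "inj enc"
proof (rule injI)
  fix a b show "enc a = enc b \<Longrightarrow> a = b"
    by (induction a arbitrary: b; case_tac b; simp)
qed

lemma enc_sub: "B \<in> sub A \<Longrightarrow> enc B \<le> enc A"
proof (induction A)
  case (And a b) then show ?case using enc_lt(1)[where a=a and b=b] enc_lt(2)[where a=a and b=b] by (auto intro: le_trans less_imp_le)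
next
  case (Or a b) then show ?case using enc_lt(3)[where a=a and b=b] enc_lt(4)[where a=a and b=b] by (auto intro: le_trans less_imp_le)
next
  case (Imp a b) then show ?case using enc_lt(5)[where a=a and b=b] enc_lt(6)[where a=a and b=b] by (auto intro: le_trans less_imp_le)
next
  case (Box a) then show ?case using enc_lt(7)[of a] by (auto intro: le_trans less_imp_le)
qed auto

lemma tag5: "fst (prod_decode (enc F)) = 5 \<Longrightarrow> \<exists>C. F = Box C"
  by (cases F) auto

definition codeS :: "form set \<Rightarrow> nat" where
  "codeS G = set_encode (enc ` G)"

lemma completeness_code:
  assumes np: "\<not> LC_prf A"
  defines "N \<equiv> enc A"
  defines "M \<equiv> (2::nat) ^ Suc N"
  shows "\<exists>w<2 ^ M. \<exists>s<M. s \<in> sd w \<and> \<not> forces (WF M w) (leF N) (relF N) VF s A"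
proof -
  have "\<not> D {} A" using np D_empty by blast
  then obtain G0 where G0: "prime A G0" "\<not> D G0 A" using lindenbaum[of "{}" A A] by auto
  let ?P = "{G. prime A G}"
  have "?P \<subseteq> Pow (sub A)" using prime_sub by blast
  then have finP: "finite ?P" using finite_sub by (meson finite_Pow_iff finite_subset)
  have finG: "prime A G \<Longrightarrow> finite G" for G using finite_subset[OF prime_sub finite_sub] by blast
  have sdc: "prime A G \<Longrightarrow> sd (codeS G) = enc ` G" for G
    unfolding codeS_def using finG by simp
  have encs: "prime A G \<Longrightarrow> enc ` G \<subseteq> {..<Suc N}" for G
    using prime_sub enc_sub unfolding N_def by fastforce
  have cb: "prime A G \<Longrightarrow> codeS G < M" for G
    unfolding codeS_def M_def using encs by (rule set_encode_bound)
  define Ws where "Ws = codeS ` ?P"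
  define w where "w = set_encode Ws"
  have finW: "finite Ws" using finP Ws_def by simp
  have sdw: "sd w = Ws" unfolding w_def using finW by simp
  have wb: "w < 2 ^ M" unfolding w_def by (rule set_encode_bound) (use cb in \<open>auto simp: Ws_def\<close>)
  have WFiff: "\<forall>y. WF M w y \<longleftrightarrow> (\<exists>G. prime A G \<and> y = codeS G)"
    unfolding WF_def sdw Ws_def using cb by auto
  have leiff: "\<forall>G H. prime A G \<longrightarrow> prime A H \<longrightarrow> leF N (codeS G) (codeS H) = (G \<subseteq> H)"
  proof (intro allI impI)
    fix G H assume G: "prime A G" and H: "prime A H"
    have "leF N (codeS G) (codeS H) \<longleftrightarrow> enc ` G \<subseteq> enc ` H"
      unfolding leF_def sdc[OF G] sdc[OF H] using encs[OF G] by auto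
    also have "\<dots> \<longleftrightarrow> G \<subseteq> H" using enc_inj by (simp add: inj_image_subset_iff)
    finally show "leF N (codeS G) (codeS H) = (G \<subseteq> H)" .
  qed
  have neq: "prime A G \<Longrightarrow> prime A H \<Longrightarrow> codeS G = codeS H \<longleftrightarrow> G = H" for G H
    using sdc enc_inj by (metis inj_image_eq_iff)
  have boxiff: "(\<forall>c<Suc N. c \<in> sd (codeS G) \<and> fst (prod_decode c) = 5 \<longrightarrow> snd (prod_decode c) \<in> sd (codeS H))
       \<longleftrightarrow> (\<forall>C. Box C \<in> G \<longrightarrow> C \<in> H)" if G: "prime A G" and H: "prime A H" for G H
  proof
    assume a: "\<forall>c<Suc N. c \<in> sd (codeS G) \<and> fst (prod_decode c) = 5 \<longrightarrow> snd (prod_decode c) \<in> sd (codeS H)"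
    show "\<forall>C. Box C \<in> G \<longrightarrow> C \<in> H"
    proof (intro allI impI)
      fix C assume "Box C \<in> G"
      then have e: "enc (Box C) \<in> enc ` G" by (rule imageI)
      then have "enc (Box C) < Suc N" "enc (Box C) \<in> sd (codeS G)" using encs[OF G] sdc[OF G] by auto
      then have "enc C \<in> enc ` H" using a sdc[OF H] by auto
      then show "C \<in> H" using enc_inj by (simp add: inj_image_mem_iff)
    qed
  next
    assume a: "\<forall>C. Box C \<in> G \<longrightarrow> C \<in> H"
    show "\<forall>c<Suc N. c \<in> sd (codeS G) \<and> fst (prod_decode c) = 5 \<longrightarrow> snd (prod_decode c) \<in> sd (codeS H)"
    proof (intro allI impI)
      fix c assume c: "c < Suc N" "c \<in> sd (codeS G) \<and> fst (prod_decode c) = 5"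
      then obtain F where F: "F \<in> G" "c = enc F" using sdc[OF G] by auto
      then obtain C where "F = Box C" using tag5 c by blast
      then show "snd (prod_decode c) \<in> sd (codeS H)" using F a sdc[OF H] by auto
    qed
  qed
  have riff: "\<forall>G H. prime A G \<longrightarrow> prime A H \<longrightarrow> relF N (codeS G) (codeS H) = Rc G H"
    using leiff neq boxiff unfolding relF_def Rc_def by auto
  have viff: "\<forall>p G. prime A G \<longrightarrow> VF p (codeS G) = Vc p G"
  proof (intro allI impI)
    fix p G assume G: "prime A G"
    show "VF p (codeS G) = Vc p G"
      unfolding VF_def Vc_def sdc[OF G] using enc_inj by (rule inj_image_mem_iff)
  qed
  have "forces (WF M w) (leF N) (relF N) VF (codeS G0) A = forces (prime A) (\<subseteq>) Rc Vc G0 A"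
    by (rule forces_iso[OF WFiff leiff riff viff G0(1)])
  also have "\<dots> \<longleftrightarrow> A \<in> G0" using truth[OF sub_self G0(1)] .
  finally have "\<not> forces (WF M w) (leF N) (relF N) VF (codeS G0) A" using G0(2) D_hyp by blast
  moreover have "codeS G0 \<in> sd w" unfolding sdw Ws_def using G0 by auto
  ultimately show ?thesis using wb cb[OF G0(1)] by blast
qed

theorem dec_iff: "decF (enc A) \<longleftrightarrow> LC_prf A"
proof
  assume "LC_prf A"
  then show "decF (enc A)" unfolding dec_forces
    using soundness[OF code_frame] by (auto simp: WF_def)
next
  assume "decF (enc A)"
  then show "LC_prf A" unfolding dec_forces using completeness_code by blast
qed


definition "LEe s t N = EForall (Plus N (K 1)) (EImp (EMem (V 0) (shift 0 s)) (EMem (V 0) (shift 0 t)))"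
definition "RELe s t N = EConj (LEe s t N) (EConj (ENot (EEq s t))
   (EForall (Plus N (K 1)) (EImp (EConj (EMem (V 0) (shift 0 s)) (EEq (EDfst (V 0)) (K 5)))
      (EMem (EDsnd (V 0)) (shift 0 t)))))"

lemma wfe_LEe[simp]: "wfe n (LEe s t N) = (wfe n s \<and> wfe n t \<and> wfe n N)"
  by (auto simp: LEe_def)
lemma wfe_RELe[simp]: "wfe n (RELe s t N) = (wfe n s \<and> wfe n t \<and> wfe n N)"
  by (auto simp: RELe_def)

lemma eval_LEe[simp]: "eval (LEe s t N) env = of_bool (leF (eval N env) (eval s env) (eval t env))"
  by (simp add: LEe_def leF_def)

lemma eval_RELe[simp]: "eval (RELe s t N) env = of_bool (relF (eval N env) (eval s env) (eval t env))"
  by (simp add: RELe_def relF_def) blast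

definition "BODYe =
  Plus (EMul (EEq (V 3) (K 0)) (EMem (V 5) (V 4)))
  (Plus (EMul (EEq (V 3) (K 2)) (EConj (EMem (Plus (EMul (V 1) (V 8)) (V 4)) (V 6))
                                         (EMem (Plus (EMul (V 0) (V 8)) (V 4)) (V 6))))
  (Plus (EMul (EEq (V 3) (K 3)) (ESg (Plus (EMem (Plus (EMul (V 1) (V 8)) (V 4)) (V 6))
                                         (EMem (Plus (EMul (V 0) (V 8)) (V 4)) (V 6)))))
  (Plus (EMul (EEq (V 3) (K 4))
          (EForall (V 8) (EImp (EConj (EMem (V 0) (V 8)) (EConj (LEe (V 5) (V 0) (V 10))
                                        (EMem (Plus (EMul (V 2) (V 9)) (V 0)) (V 7))))
                               (EMem (Plus (EMul (V 1) (V 9)) (V 0)) (V 7)))))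
        (EMul (EEq (V 3) (K 5))
          (EForall (V 8) (EImp (EConj (EMem (V 0) (V 8)) (RELe (V 5) (V 0) (V 10)))
                               (EMem (Plus (EMul (V 3) (V 9)) (V 0)) (V 7))))))))"

definition "NEWe = ELet (EDfst (V 1)) (ELet (EDsnd (V 2)) (ELet (EDfst (V 0)) (ELet (EDsnd (V 1)) BODYe)))"

lemma wfe_NEWe: "wfe 6 NEWe"
  by (simp add: NEWe_def BODYe_def)

lemma eval_NEWe: "eval NEWe (s # c # tab # w # M # k # rest) = of_bool (newF k M w c s tab)"
proof -
  obtain a b where ab: "prod_decode c = (a, b)" by fastforce
  obtain x y where xy: "prod_decode b = (x, y)" by fastforce
  show ?thesis
    unfolding NEWe_def BODYe_def
    by (simp add: ab xy newF_def Let_def numeral_eq_Suc) blast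
qed

definition "STEPe = Plus (V 1) (EMul (EPow2 (EMul (V 0) (V 3))) (ESum (V 3) (EMul NEWe (EPow2 (V 0)))))"
definition "TABe = Rec (Plus (V 2) (K 1)) (K 0) STEPe"
definition "DECe = ELet (EPow2 (Plus (V 0) (K 1)))
   (EForall (EPow2 (V 0)) (ELet TABe
     (EForall (V 2) (EImp (EMem (V 0) (V 2)) (EMem (Plus (EMul (V 4) (V 3)) (V 0)) (V 1))))))"

lemma wfe_DECe: "wfe 1 DECe"
proof -
  have "wfe 6 NEWe" by (rule wfe_NEWe)
  then show ?thesis by (simp add: DECe_def TABe_def STEPe_def numeral_eq_Suc)
qed

lemma sum_set_encode: "(\<Sum>s<M. of_bool (P s) * 2 ^ s) = set_encode {s. s < M \<and> P s}"
proof -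
  have "set_encode {s. s < M \<and> P s} = (\<Sum>s\<in>{..<M} \<inter> {s. P s}. 2 ^ s)"
    unfolding set_encode_def by (rule sum.cong) auto
  also have "\<dots> = (\<Sum>s<M. of_bool (P s) * 2 ^ s)"
    by (simp add: sum.inter_restrict of_bool_def) (rule sum.cong, auto)
  finally show ?thesis by simp
qed

lemma eval_STEPe: "eval STEPe (c # tab # w # M # k # rest) = tab + 2 ^ (c * M) * layer k M w c tab"
  unfolding STEPe_def layer_def
  by (simp add: eval_NEWe sum_set_encode)

lemma eval_TABe: "eval TABe (w # M # k # rest) = tabF k M w (Suc k)"
proof -
  have "(\<lambda>c tab. eval STEPe (c # tab # w # M # k # rest)) = (\<lambda>c tab. tab + 2 ^ (c * M) * layer k M w c tab)"
    by (intro ext) (rule eval_STEPe)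
  then show ?thesis unfolding TABe_def tabF_def by simp
qed

lemma eval_DECe: "eval DECe [k] = of_bool (decF k)"
  unfolding DECe_def decF_def by (simp add: eval_TABe del: tabF_Suc) blast

theorem decidable: "decidable_forms LC_prf"
proof -
  obtain r where r: "\<forall>xs. length xs = 1 \<longrightarrow> rec_eval r xs (eval DECe xs)"
    using comp_eval[OF wfe_DECe] unfolding rcomp_def by blast
  have "rec_eval r [enc A] (if LC_prf A then 1 else 0)" for A
    using r[rule_format, of "[enc A]"] eval_DECe[of "enc A"] dec_iff[of A] by (cases "LC_prf A") simp_all
  then show ?thesis unfolding decidable_forms_def by blast
qed


theorem theorem4p26:
  shows "decidable_forms LC_prf"
  by (rule decidable)

end
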